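(* Consider a Markov decision process with state space $\mathcal{S}$ and action space $\mathcal{A}$ (subsets of Euclidean spaces), initial state distribution $\alpha$, stochastic policy $\pi(a\mid s)$, discount factor $\gamma\in(0,1)$, reward function $r(s,a)$, real transition density $T$ and learned transition density $T'$. Let $\rho_T^{\alpha,\pi},\rho_{T'}^{\alpha,\pi}$ be the normalized occupancy measures generated by $(\alpha,\pi,T)$ and $(\alpha,\pi,T')$, and let $p(s,a,s')=\rho_T^{\alpha,\pi}(s,a)T(s'\mid s,a)$, $p'(s,a,s')=\rho_{T'}^{\alpha,\pi}(s,a)T'(s'\mid s,a)$. If $r$ is $L_r$-Lipschitz and the training error of the WGAN is $\epsilon$, i.e. $W_1(p\,\|\,p')=\epsilon$, then $$|R(\pi,T)-R(\pi,T')|\le \frac{\epsilon L_r}{1-\gamma}.$$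
   Context: The normalized occupancy measure is $\rho_T^{\alpha,\pi}(s,a)=\sum_{t=0}^\infty(1-\gamma)\gamma^t\,\mathbb{P}(s_t=s,a_t=a\mid\alpha,\pi,T)$ for trajectories $s_0\sim\alpha$, $a_t\sim\pi(\cdot\mid s_t)$, $s_{t+1}\sim T(\cdot\mid s_t,a_t)$. The cumulative reward is $R(\pi,T)=R(\alpha,\pi,T)=\mathbb{E}\big[\sum_{t=0}^\infty\gamma^t r(s_t,a_t)\mid\alpha,\pi,T\big]=\mathbb{E}_{(s,a)\sim\rho_T^{\alpha,\pi}}[r(s,a)]/(1-\gamma)$. $W_1$ denotes the 1-Wasserstein distance, with Euclidean metrics on $\mathcal{S}\times\mathcal{A}$ and $\mathcal{S}\times\mathcal{A}\times\mathcal{S}$. *)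

theory Defs
  imports "HOL-Probability.Probability"
begin

definition sa_init ::
  "'s::euclidean_space measure \<Rightarrow> ('s \<Rightarrow> 'a::euclidean_space measure) \<Rightarrow> ('s \<times> 'a) measure" where
  "sa_init \<alpha> \<pi> = bind \<alpha> (\<lambda>s. bind (\<pi> s) (\<lambda>a. return borel (s, a)))"

primrec sa_dist ::
  "'s::euclidean_space measure \<Rightarrow> ('s \<Rightarrow> 'a::euclidean_space measure) \<Rightarrow>
   ('s \<times> 'a \<Rightarrow> 's measure) \<Rightarrow> nat \<Rightarrow> ('s \<times> 'a) measure" where
  "sa_dist \<alpha> \<pi> T 0 = sa_init \<alpha> \<pi>"
| "sa_dist \<alpha> \<pi> T (Suc t) =
     bind (sa_dist \<alpha> \<pi> T t)
       (\<lambda>(s, a). bind (T (s, a)) (\<lambda>s'. bind (\<pi> s') (\<lambda>a'. return borel (s', a'))))"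

definition occupancy ::
  "real \<Rightarrow> 's::euclidean_space measure \<Rightarrow> ('s \<Rightarrow> 'a::euclidean_space measure) \<Rightarrow>
   ('s \<times> 'a \<Rightarrow> 's measure) \<Rightarrow> ('s \<times> 'a) measure" where
  "occupancy \<gamma> \<alpha> \<pi> T = measure_of UNIV (sets borel)
     (\<lambda>X. \<Sum>t. ennreal ((1 - \<gamma>) * \<gamma> ^ t) * emeasure (sa_dist \<alpha> \<pi> T t) X)"

definition cumulative_reward ::
  "real \<Rightarrow> 's::euclidean_space measure \<Rightarrow> ('s \<Rightarrow> 'a::euclidean_space measure) \<Rightarrow>
   ('s \<times> 'a \<Rightarrow> 's measure) \<Rightarrow> ('s \<times> 'a \<Rightarrow> real) \<Rightarrow> real" where
  "cumulative_reward \<gamma> \<alpha> \<pi> T r = (\<integral>x. r x \<partial>occupancy \<gamma> \<alpha> \<pi> T) / (1 - \<gamma>)"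

definition transition_joint ::
  "('s::euclidean_space \<times> 'a::euclidean_space) measure \<Rightarrow> ('s \<times> 'a \<Rightarrow> 's measure) \<Rightarrow>
   ('s \<times> 'a \<times> 's) measure" where
  "transition_joint \<rho> T = bind \<rho> (\<lambda>(s, a). bind (T (s, a)) (\<lambda>s'. return borel (s, a, s')))"

definition couplings :: "'b::metric_space measure \<Rightarrow> 'b measure \<Rightarrow> ('b \<times> 'b) measure set" where
  "couplings P Q = {C. prob_space C \<and> sets C = sets (borel :: ('b \<times> 'b) measure) \<and>
      distr C borel fst = P \<and> distr C borel snd = Q}"

definition wasserstein1 :: "'b::metric_space measure \<Rightarrow> 'b measure \<Rightarrow> ennreal" where
  "wasserstein1 P Q = (INF C\<in>couplings P Q. \<integral>\<^sup>+ z. ennreal (dist (fst z) (snd z)) \<partial>C)"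

end

theory Submission
  imports Defs
begin

lemma K_init_meas:
  fixes \<pi> :: "'s::euclidean_space \<Rightarrow> 'a::euclidean_space measure"
  assumes "\<pi> \<in> borel \<rightarrow>\<^sub>M prob_algebra borel"
  shows "(\<lambda>s. bind (\<pi> s) (\<lambda>a. return borel (s, a))) \<in> borel \<rightarrow>\<^sub>M prob_algebra (borel :: ('s \<times> 'a) measure)"
proof (rule measurable_bind_prob_space2[OF assms])
  have "(\<lambda>(x, y). return borel (x, y)) = (return borel :: 's \<times> 'a \<Rightarrow> _)" by auto
  then show "(\<lambda>(x, y). return borel (x, y)) \<in> (borel \<Otimes>\<^sub>M borel) \<rightarrow>\<^sub>M prob_algebra (borel :: ('s \<times> 'a) measure)"
    by (simp add: borel_prod)
qed

lemma K_step_meas: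
  fixes \<pi> :: "'s::euclidean_space \<Rightarrow> 'a::euclidean_space measure"
  assumes "\<pi> \<in> borel \<rightarrow>\<^sub>M prob_algebra borel" "T \<in> borel \<rightarrow>\<^sub>M prob_algebra borel"
  shows "(\<lambda>(s, a). bind (T (s, a)) (\<lambda>s'. bind (\<pi> s') (\<lambda>a'. return borel (s', a')))) \<in> borel \<rightarrow>\<^sub>M prob_algebra (borel :: ('s \<times> 'a) measure)"
proof -
  have "(\<lambda>x. bind (T x) (\<lambda>s'. bind (\<pi> s') (\<lambda>a'. return borel (s', a')))) \<in> borel \<rightarrow>\<^sub>M prob_algebra (borel :: ('s \<times> 'a) measure)"
    by (rule measurable_bind_prob_space[OF assms(2) K_init_meas[OF assms(1)]])
  then show ?thesis by (simp add: case_prod_beta')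
qed

lemma K_joint_meas:
  fixes T :: "'s::euclidean_space \<times> 'a::euclidean_space \<Rightarrow> 's measure"
  assumes "T \<in> borel \<rightarrow>\<^sub>M prob_algebra borel"
  shows "(\<lambda>(s, a). bind (T (s, a)) (\<lambda>s'. return borel (s, a, s'))) \<in> borel \<rightarrow>\<^sub>M prob_algebra (borel :: ('s \<times> 'a \<times> 's) measure)"
proof -
  have c: "continuous_on UNIV (\<lambda>(x::'s\<times>'a, y::'s). (fst x, snd x, y))"
    by (auto simp: case_prod_beta' intro!: continuous_intros)
  have "(\<lambda>(x::'s\<times>'a, y::'s). (fst x, snd x, y)) \<in> borel \<rightarrow>\<^sub>M borel"
    by (rule borel_measurable_continuous_onI[OF c])
  then have m: "(\<lambda>(x::'s\<times>'a, y::'s). return (borel :: ('s \<times> 'a \<times> 's) measure) (fst x, snd x, y)) \<in> (borel \<Otimes>\<^sub>M borel) \<rightarrow>\<^sub>M prob_algebra borel"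
    unfolding borel_prod
    using measurable_comp[OF _ measurable_return_prob_space] by (simp add: case_prod_beta' comp_def)
  have "(\<lambda>x. bind (T x) (\<lambda>s'. return borel (fst x, snd x, s'))) \<in> borel \<rightarrow>\<^sub>M prob_algebra (borel :: ('s \<times> 'a \<times> 's) measure)"
    by (rule measurable_bind_prob_space2[OF assms m])
  then show ?thesis by (simp add: case_prod_beta')
qed


lemma bind_in_prob_algebra:
  assumes "M \<in> space (prob_algebra N)" "K \<in> N \<rightarrow>\<^sub>M prob_algebra R"
  shows "bind M K \<in> space (prob_algebra R)"
  using prob_space_bind'[OF assms] sets_bind'[OF assms] by (simp add: space_prob_algebra)

lemma in_prob_algebra:
  assumes "f \<in> M \<rightarrow>\<^sub>M prob_algebra N" "x \<in> space M"
  shows "prob_space (f x)" "sets (f x) = sets N"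
  using measurable_space[OF assms] by (auto simp: space_prob_algebra)

lemma prob_AE_of_1:
  assumes "prob_space M" "emeasure M X = 1"
  shows "AE x in M. x \<in> X"
proof -
  interpret prob_space M by fact
  have "X \<in> sets M" using assms(2) emeasure_notin_sets by fastforce
  then have "prob X = 1" using assms(2) by (simp add: emeasure_eq_measure)
  then show ?thesis by (rule AE_prob_1)
qed

lemma SA_pred:
  fixes S :: "'s::euclidean_space set" and A :: "'a::euclidean_space set"
  assumes "S \<in> sets borel" "A \<in> sets borel"
  shows "S \<times> A \<in> sets (borel :: ('s \<times> 'a) measure)"
proof -
  show ?thesis unfolding borel_prod[symmetric] using assms by auto
qed

lemma K_init_AE:
  fixes \<pi> :: "'s::euclidean_space \<Rightarrow> 'a::euclidean_space measure"
  assumes "\<pi> \<in> borel \<rightarrow>\<^sub>M prob_algebra borel" "emeasure (\<pi> s) A = 1"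
    "S \<in> sets borel" "A \<in> sets borel" "s \<in> S"
  shows "AE y in bind (\<pi> s) (\<lambda>a. return borel (s, a)). y \<in> S \<times> A"
proof -
  have ps: "prob_space (\<pi> s)" and ss: "sets (\<pi> s) = sets borel"
    using in_prob_algebra[OF assms(1)] by auto
  have km: "(\<lambda>a. return (borel :: ('s \<times> 'a) measure) (s, a)) \<in> \<pi> s \<rightarrow>\<^sub>M subprob_algebra borel"
    by (subst measurable_cong_sets[OF ss refl]) simp
  have pr: "Measurable.pred borel (\<lambda>y::'s\<times>'a. y \<in> S \<times> A)"
    using SA_pred[OF assms(3,4)] by (simp add: pred_def)
  have "AE a in \<pi> s. a \<in> A" by (rule prob_AE_of_1[OF ps assms(2)])
  then have "AE a in \<pi> s. AE y in return borel (s, a). y \<in> S \<times> A"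
    using assms(5) SA_pred[OF assms(3,4)] by (auto simp: AE_return)
  then show ?thesis by (subst AE_bind[OF km pr])
qed

lemma sa_dist_props:
  fixes \<alpha> :: "'s::euclidean_space measure" and \<pi> :: "'s \<Rightarrow> 'a::euclidean_space measure"
  assumes "S \<in> sets borel" and "A \<in> sets borel"
    and "prob_space \<alpha>" and "sets \<alpha> = sets borel" and "emeasure \<alpha> S = 1"
    and "\<pi> \<in> borel \<rightarrow>\<^sub>M prob_algebra borel" and "\<forall>s\<in>S. emeasure (\<pi> s) A = 1"
    and "T \<in> borel \<rightarrow>\<^sub>M prob_algebra borel" and "\<forall>s\<in>S. \<forall>a\<in>A. emeasure (T (s, a)) S = 1"
  shows "sa_dist \<alpha> \<pi> T t \<in> space (prob_algebra borel) \<and> (AE x in sa_dist \<alpha> \<pi> T t. x \<in> S \<times> A)"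
proof (induction t)
  case 0
  have a: "\<alpha> \<in> space (prob_algebra borel)" using assms(3,4) by (simp add: space_prob_algebra)
  have km: "(\<lambda>s. bind (\<pi> s) (\<lambda>a. return borel (s, a))) \<in> \<alpha> \<rightarrow>\<^sub>M subprob_algebra (borel :: ('s \<times> 'a) measure)"
    by (subst measurable_cong_sets[OF assms(4) refl]) (rule measurable_prob_algebraD[OF K_init_meas[OF assms(6)]])
  have pr: "Measurable.pred borel (\<lambda>y::'s\<times>'a. y \<in> S \<times> A)"
    using SA_pred[OF assms(1,2)] by (simp add: pred_def)
  have "AE s in \<alpha>. s \<in> S" by (rule prob_AE_of_1[OF assms(3,5)])
  then have "AE s in \<alpha>. AE y in bind (\<pi> s) (\<lambda>a. return borel (s, a)). y \<in> S \<times> A"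
    by eventually_elim (rule K_init_AE[OF assms(6) _ assms(1,2)], use assms(7) in auto)
  then have "AE y in sa_dist \<alpha> \<pi> T 0. y \<in> S \<times> A"
    by (simp only: sa_dist.simps sa_init_def AE_bind[OF km pr])
  moreover have "sa_dist \<alpha> \<pi> T 0 \<in> space (prob_algebra borel)"
    by (simp add: sa_init_def bind_in_prob_algebra[OF a K_init_meas[OF assms(6)]])
  ultimately show ?case by simp
next
  case (Suc t)
  let ?K = "(\<lambda>(s, a). bind (T (s, a)) (\<lambda>s'. bind (\<pi> s') (\<lambda>a'. return borel (s', a'))))"
  have a: "sa_dist \<alpha> \<pi> T t \<in> space (prob_algebra borel)" using Suc by simp
  have ss: "sets (sa_dist \<alpha> \<pi> T t) = sets borel" using a by (simp add: space_prob_algebra)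
  have km: "?K \<in> sa_dist \<alpha> \<pi> T t \<rightarrow>\<^sub>M subprob_algebra (borel :: ('s \<times> 'a) measure)"
    by (subst measurable_cong_sets[OF ss refl]) (rule measurable_prob_algebraD[OF K_step_meas[OF assms(6,8)]])
  have pr: "Measurable.pred borel (\<lambda>y::'s\<times>'a. y \<in> S \<times> A)"
    using SA_pred[OF assms(1,2)] by (simp add: pred_def)
  have inner: "AE y in ?K x. y \<in> S \<times> A" if x: "x \<in> S \<times> A" for x
  proof -
    obtain s a where xa: "x = (s, a)" "s \<in> S" "a \<in> A" using x by auto
    have ps: "prob_space (T (s, a))" and ss': "sets (T (s, a)) = sets borel"
      using in_prob_algebra[OF assms(8)] by auto
    have km': "(\<lambda>s'. bind (\<pi> s') (\<lambda>a'. return borel (s', a'))) \<in> T (s, a) \<rightarrow>\<^sub>M subprob_algebra (borel :: ('s \<times> 'a) measure)"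
      by (subst measurable_cong_sets[OF ss' refl]) (rule measurable_prob_algebraD[OF K_init_meas[OF assms(6)]])
    have "AE s' in T (s, a). s' \<in> S" by (rule prob_AE_of_1[OF ps]) (use assms(9) xa in auto)
    then have "AE s' in T (s, a). AE y in bind (\<pi> s') (\<lambda>a'. return borel (s', a')). y \<in> S \<times> A"
      by eventually_elim (rule K_init_AE[OF assms(6) _ assms(1,2)], use assms(7) in auto)
    then show ?thesis by (simp only: xa(1) prod.case AE_bind[OF km' pr])
  qed
  have "AE x in sa_dist \<alpha> \<pi> T t. AE y in ?K x. y \<in> S \<times> A"
    using Suc by (elim conjE) (erule AE_mp, rule AE_I2, use inner in blast)
  then have "AE y in sa_dist \<alpha> \<pi> T (Suc t). y \<in> S \<times> A"
    by (simp only: sa_dist.simps AE_bind[OF km pr])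
  moreover have "sa_dist \<alpha> \<pi> T (Suc t) \<in> space (prob_algebra borel)"
    by (simp only: sa_dist.simps bind_in_prob_algebra[OF a K_step_meas[OF assms(6,8)]])
  ultimately show ?case by simp
qed


lemma occ_sets: "sets (occupancy \<gamma> \<alpha> \<pi> T) = sets borel"
  unfolding occupancy_def
  by (subst sets_measure_of) (auto simp: sets.sigma_sets_eq[of borel, simplified])

lemma occ_space: "space (occupancy \<gamma> \<alpha> \<pi> T) = UNIV"
  unfolding occupancy_def by (simp add: space_measure_of_conv)

lemma occ_AE:
  fixes \<alpha> :: "'s::euclidean_space measure" and \<pi> :: "'s \<Rightarrow> 'a::euclidean_space measure"
  assumes "S \<in> sets borel" and "A \<in> sets borel"
    and "prob_space \<alpha>" and "sets \<alpha> = sets borel" and "emeasure \<alpha> S = 1"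
    and "\<pi> \<in> borel \<rightarrow>\<^sub>M prob_algebra borel" and "\<forall>s\<in>S. emeasure (\<pi> s) A = 1"
    and "T \<in> borel \<rightarrow>\<^sub>M prob_algebra borel" and "\<forall>s\<in>S. \<forall>a\<in>A. emeasure (T (s, a)) S = 1"
  shows "AE x in occupancy \<gamma> \<alpha> \<pi> T. x \<in> S \<times> A"
proof (rule AE_I[where N="- (S \<times> A)"])
  have m: "- (S \<times> A) \<in> sets (borel :: ('s \<times> 'a) measure)" using SA_pred[OF assms(1,2)] by auto
  then show "- (S \<times> A) \<in> sets (occupancy \<gamma> \<alpha> \<pi> T)" by (simp add: occ_sets)
  show "{x \<in> space (occupancy \<gamma> \<alpha> \<pi> T). x \<notin> S \<times> A} \<subseteq> - (S \<times> A)" by auto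
  have z: "emeasure (sa_dist \<alpha> \<pi> T t) (- (S \<times> A)) = 0" for t
  proof -
    have "AE x in sa_dist \<alpha> \<pi> T t. x \<in> S \<times> A" using sa_dist_props[OF assms] by blast
    moreover have "- (S \<times> A) \<in> sets (sa_dist \<alpha> \<pi> T t)"
      using sa_dist_props[OF assms, of t] m by (simp add: space_prob_algebra)
    moreover have "space (sa_dist \<alpha> \<pi> T t) = UNIV"
      using sa_dist_props[OF assms, of t] sets_eq_imp_space_eq by (force simp: space_prob_algebra)
    ultimately show ?thesis using AE_iff_measurable[of "- (S \<times> A)" "sa_dist \<alpha> \<pi> T t" "\<lambda>x. x \<in> S \<times> A"]
      by auto
  qed
  show "emeasure (occupancy \<gamma> \<alpha> \<pi> T) (- (S \<times> A)) = 0"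
    unfolding occupancy_def emeasure_measure_of_conv by (simp add: z)
qed


lemma proj_meas: "(\<lambda>(s::'s::euclidean_space, a::'a::euclidean_space, s'::'s). (s, a)) \<in> borel \<rightarrow>\<^sub>M borel"
  by (rule borel_measurable_continuous_onI) (auto simp: case_prod_beta' intro!: continuous_intros)

lemma tj_marg:
  fixes \<rho> :: "('s::euclidean_space \<times> 'a::euclidean_space) measure"
  assumes "sets \<rho> = sets borel" "space \<rho> \<noteq> {}" "T \<in> borel \<rightarrow>\<^sub>M prob_algebra borel"
  shows "distr (transition_joint \<rho> T) borel (\<lambda>(s, a, s'). (s, a)) = \<rho>"
proof -
  let ?K = "(\<lambda>(s, a). bind (T (s, a)) (\<lambda>s'. return borel (s, a, s')))"
  have km: "?K \<in> \<rho> \<rightarrow>\<^sub>M subprob_algebra (borel :: ('s \<times> 'a \<times> 's) measure)"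
    by (subst measurable_cong_sets[OF assms(1) refl]) (rule measurable_prob_algebraD[OF K_joint_meas[OF assms(3)]])
  have "distr (transition_joint \<rho> T) borel (\<lambda>(s, a, s'). (s, a)) = \<rho> \<bind> (\<lambda>x. distr (?K x) borel (\<lambda>(s, a, s'). (s, a)))"
    unfolding transition_joint_def by (rule distr_bind[OF km assms(2) proj_meas])
  also have "\<dots> = \<rho> \<bind> return borel"
  proof (rule bind_cong[OF refl])
    fix x assume "x \<in> space \<rho>"
    obtain s a where x: "x = (s, a)" by (cases x)
    have ps: "prob_space (T (s, a))" and ss: "sets (T (s, a)) = sets borel"
      using in_prob_algebra[OF assms(3)] by auto
    have km': "(\<lambda>s'. return (borel :: ('s \<times> 'a \<times> 's) measure) (s, a, s')) \<in> T (s, a) \<rightarrow>\<^sub>M subprob_algebra borel"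
      by (subst measurable_cong_sets[OF ss refl]) simp
    have "distr (?K x) borel (\<lambda>(s, a, s'). (s, a)) = T (s, a) \<bind> (\<lambda>s'. distr (return borel (s, a, s')) borel (\<lambda>(s, a, s'). (s, a)))"
      unfolding x prod.case using ps by (intro distr_bind[OF km' _ proj_meas]) (simp add: prob_space.not_empty)
    also have "\<dots> = T (s, a) \<bind> (\<lambda>s'. return borel (s, a))"
      by (intro bind_cong[OF refl]) (simp add: distr_return[OF proj_meas])
    also have "\<dots> = return borel (s, a)"
      by (rule bind_const'[OF ps]) (simp add: subprob_space_return)
    finally show "distr (?K x) borel (\<lambda>(s, a, s'). (s, a)) = return borel x" using x by simp
  qed
  also have "\<dots> = \<rho>" by (rule bind_return''[OF assms(1)])
  finally show ?thesis .
qed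


lemma proj_dist:
  fixes u v :: "'s::euclidean_space \<times> 'a::euclidean_space \<times> 's"
  shows "dist ((\<lambda>(s, a, s'). (s, a)) u) ((\<lambda>(s, a, s'). (s, a)) v) \<le> dist u v"
proof -
  obtain s a s' t b t' where uv: "u = (s, a, s')" "v = (t, b, t')" by (cases u, cases v) auto
  have "dist a b \<le> dist (a, s') (b, t')" using dist_fst_le[of "(a, s')" "(b, t')"] by simp
  then have "(dist a b)^2 \<le> (dist (a, s') (b, t'))^2" by (simp add: power_mono)
  then show ?thesis unfolding uv by (simp add: dist_Pair_Pair)
qed

lemma fst_meas: "(fst :: ('b::euclidean_space \<times> 'b) \<Rightarrow> 'b) \<in> borel \<rightarrow>\<^sub>M borel"
  by (rule borel_measurable_continuous_onI) (auto intro!: continuous_intros)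
lemma snd_meas: "(snd :: ('b::euclidean_space \<times> 'b) \<Rightarrow> 'b) \<in> borel \<rightarrow>\<^sub>M borel"
  by (rule borel_measurable_continuous_onI) (auto intro!: continuous_intros)
lemma dist_meas: "(\<lambda>z::('b::euclidean_space \<times> 'b). dist (fst z) (snd z)) \<in> borel \<rightarrow>\<^sub>M borel"
  by (rule borel_measurable_continuous_onI) (auto intro!: continuous_intros)

lemma transfer_side:
  fixes \<rho> :: "('s::euclidean_space \<times> 'a::euclidean_space) measure"
    and C :: "(('s \<times> 'a \<times> 's) \<times> ('s \<times> 'a \<times> 's)) measure"
    and r :: "'s \<times> 'a \<Rightarrow> real" and p :: "('s \<times> 'a \<times> 's) measure"
    and f :: "('s \<times> 'a \<times> 's) \<times> ('s \<times> 'a \<times> 's) \<Rightarrow> 's \<times> 'a \<times> 's"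
  assumes rho: "distr p borel (\<lambda>(s, a, s'). (s, a)) = \<rho>"
    and Cp: "distr C borel f = p" and fm: "f \<in> C \<rightarrow>\<^sub>M borel"
    and int: "integrable \<rho> r" and sr: "sets \<rho> = sets borel"
    and ae: "AE x in \<rho>. x \<in> SA" and SA: "SA \<in> sets borel"
  shows "integral\<^sup>L \<rho> r = (\<integral>z. r ((\<lambda>(s, a, s'). (s, a)) (f z)) \<partial>C)"
    "integrable C (\<lambda>z. r ((\<lambda>(s, a, s'). (s, a)) (f z)))"
    "AE z in C. (\<lambda>(s, a, s'). (s, a)) (f z) \<in> SA"
proof -
  have pm: "(\<lambda>(s::'s, a::'a, s'::'s). (s, a)) \<in> borel \<rightarrow>\<^sub>M borel" by (rule proj_meas)
  have sp: "sets p = sets borel" using Cp by auto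
  have pmp: "(\<lambda>(s::'s, a::'a, s'::'s). (s, a)) \<in> p \<rightarrow>\<^sub>M borel"
    using pm measurable_cong_sets[OF sp refl] by blast
  have rm: "r \<in> borel \<rightarrow>\<^sub>M borel"
    using borel_measurable_integrable[OF int] measurable_cong_sets[OF sr refl] by blast
  have rpm: "(\<lambda>x::'s\<times>'a\<times>'s. r ((\<lambda>(s, a, s'). (s, a)) x)) \<in> borel \<rightarrow>\<^sub>M borel"
    by (rule measurable_compose[OF pm rm])
  show "integral\<^sup>L \<rho> r = (\<integral>z. r ((\<lambda>(s, a, s'). (s, a)) (f z)) \<partial>C)"
    unfolding rho[symmetric]
    by (subst integral_distr[OF pmp rm]) (simp add: Cp[symmetric] integral_distr[OF fm rpm])
  show "integrable C (\<lambda>z. r ((\<lambda>(s, a, s'). (s, a)) (f z)))"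
    using int unfolding rho[symmetric]
    by (subst (asm) integrable_distr_eq[OF pmp rm]) (simp add: Cp[symmetric] integrable_distr_eq[OF fm rpm])
  have "{x \<in> space borel. (\<lambda>(s::'s, a::'a, s'::'s). (s, a)) x \<in> SA} \<in> sets borel"
    using measurable_sets[OF pm SA] by (simp add: vimage_def)
  note ms = this
  have "AE x in p. (\<lambda>(s, a, s'). (s, a)) x \<in> SA"
    using ae unfolding rho[symmetric] using SA by (subst (asm) AE_distr_iff[OF pmp]) auto
  then have "AE x in distr C borel f. (\<lambda>(s, a, s'). (s, a)) x \<in> SA" unfolding Cp .
  then show "AE z in C. (\<lambda>(s, a, s'). (s, a)) (f z) \<in> SA"
    using AE_distr_iff[OF fm ms] by simp
qed


lemma coupling_bound:
  fixes \<rho> \<rho>' :: "('s::euclidean_space \<times> 'a::euclidean_space) measure"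
    and C :: "(('s \<times> 'a \<times> 's) \<times> ('s \<times> 'a \<times> 's)) measure"
    and r :: "'s \<times> 'a \<Rightarrow> real" and p p' :: "('s \<times> 'a \<times> 's) measure"
  assumes rho: "distr p borel (\<lambda>(s, a, s'). (s, a)) = \<rho>"
    and rho': "distr p' borel (\<lambda>(s, a, s'). (s, a)) = \<rho>'"
    and C: "C \<in> couplings p p'"
    and int: "integrable \<rho> r" and int': "integrable \<rho>' r"
    and sr: "sets \<rho> = sets borel" and sr': "sets \<rho>' = sets borel"
    and ae: "AE x in \<rho>. x \<in> SA" and ae': "AE x in \<rho>'. x \<in> SA" and SA: "SA \<in> sets borel"
    and lip: "L-lipschitz_on SA r"
    and W: "(\<integral>\<^sup>+ z. ennreal (dist (fst z) (snd z)) \<partial>C) \<le> ennreal w" and w: "0 \<le> w"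
  shows "\<bar>integral\<^sup>L \<rho> r - integral\<^sup>L \<rho>' r\<bar> \<le> L * w"
proof -
  have Cp: "distr C borel fst = p" and Cp': "distr C borel snd = p'" and sC: "sets C = sets borel"
    and pC: "prob_space C"
    using C by (auto simp: couplings_def)
  have fm: "fst \<in> C \<rightarrow>\<^sub>M borel" using fst_meas measurable_cong_sets[OF sC refl] by blast
  have sm: "snd \<in> C \<rightarrow>\<^sub>M borel" using snd_meas measurable_cong_sets[OF sC refl] by blast
  have dm: "(\<lambda>z. dist (fst z) (snd z)) \<in> C \<rightarrow>\<^sub>M borel" using dist_meas measurable_cong_sets[OF sC refl] by blast
  let ?P = "\<lambda>(s::'s, a::'a, s'::'s). (s, a)"
  note t1 = transfer_side[OF rho Cp fm int sr ae SA]
  note t2 = transfer_side[OF rho' Cp' sm int' sr' ae' SA]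
  let ?h = "\<lambda>z. r (?P (fst z)) - r (?P (snd z))"
  have hi: "integrable C ?h" using t1(2) t2(2) by auto
  have L0: "0 \<le> L" using lip by (rule lipschitz_on_nonneg)
  have "\<bar>integral\<^sup>L \<rho> r - integral\<^sup>L \<rho>' r\<bar> = \<bar>integral\<^sup>L C ?h\<bar>"
    using t1(1) t2(1) t1(2) t2(2) by (simp add: Bochner_Integration.integral_diff)
  also have "\<dots> \<le> integral\<^sup>L C (\<lambda>z. \<bar>?h z\<bar>)"
    using integral_norm_bound[of C ?h] by simp
  also have "\<dots> \<le> L * w"
  proof -
    have "ennreal (integral\<^sup>L C (\<lambda>z. \<bar>?h z\<bar>)) = (\<integral>\<^sup>+ z. ennreal \<bar>?h z\<bar> \<partial>C)"
      using hi by (subst nn_integral_eq_integral) auto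
    also have "\<dots> \<le> (\<integral>\<^sup>+ z. ennreal L * ennreal (dist (fst z) (snd z)) \<partial>C)"
    proof (rule nn_integral_mono_AE)
      show "AE z in C. ennreal \<bar>?h z\<bar> \<le> ennreal L * ennreal (dist (fst z) (snd z))"
        using t1(3) t2(3)
      proof eventually_elim
        case (elim z)
        have "\<bar>?h z\<bar> = dist (r (?P (fst z))) (r (?P (snd z)))" by (simp add: dist_real_def)
        also have "\<dots> \<le> L * dist (?P (fst z)) (?P (snd z))" using lipschitz_onD[OF lip elim] .
        also have "\<dots> \<le> L * dist (fst z) (snd z)" using proj_dist[of "fst z" "snd z"] L0 by (intro mult_left_mono) auto
        finally show ?case using L0 by (simp add: ennreal_mult[symmetric] ennreal_leI)
      qed
    qed
    also have "\<dots> = ennreal L * (\<integral>\<^sup>+ z. ennreal (dist (fst z) (snd z)) \<partial>C)"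
      using dm by (subst nn_integral_cmult) auto
    also have "\<dots> \<le> ennreal L * ennreal w" using W by (rule mult_left_mono) auto
    also have "\<dots> = ennreal (L * w)" using L0 w by (simp add: ennreal_mult)
    finally show ?thesis using L0 w by (simp add: ennreal_le_iff)
  qed
  finally show ?thesis .
qed


theorem theorem1:
  fixes \<alpha> :: "'s::euclidean_space measure"
    and \<pi> :: "'s \<Rightarrow> 'a::euclidean_space measure"
    and T T' :: "'s \<times> 'a \<Rightarrow> 's measure"
    and r :: "'s \<times> 'a \<Rightarrow> real"
    and S :: "'s set" and A :: "'a set"
    and \<gamma> L\<^sub>r \<epsilon> :: real
  assumes "0 < \<gamma>" and "\<gamma> < 1"
    and "S \<in> sets borel" and "A \<in> sets borel"
    and "prob_space \<alpha>" and "sets \<alpha> = sets borel" and "emeasure \<alpha> S = 1"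
    and "\<pi> \<in> borel \<rightarrow>\<^sub>M prob_algebra borel" and "\<forall>s\<in>S. emeasure (\<pi> s) A = 1"
    and "T \<in> borel \<rightarrow>\<^sub>M prob_algebra borel" and "\<forall>s\<in>S. \<forall>a\<in>A. emeasure (T (s, a)) S = 1"
    and "T' \<in> borel \<rightarrow>\<^sub>M prob_algebra borel" and "\<forall>s\<in>S. \<forall>a\<in>A. emeasure (T' (s, a)) S = 1"
    and "L\<^sub>r-lipschitz_on (S \<times> A) r"
    and "integrable (occupancy \<gamma> \<alpha> \<pi> T) r" and "integrable (occupancy \<gamma> \<alpha> \<pi> T') r"
    and "0 \<le> \<epsilon>"
    and "wasserstein1 (transition_joint (occupancy \<gamma> \<alpha> \<pi> T) T)
                      (transition_joint (occupancy \<gamma> \<alpha> \<pi> T') T') = ennreal \<epsilon>"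
  shows "\<bar>cumulative_reward \<gamma> \<alpha> \<pi> T r - cumulative_reward \<gamma> \<alpha> \<pi> T' r\<bar> \<le> \<epsilon> * L\<^sub>r / (1 - \<gamma>)"
proof -
  let ?\<rho> = "occupancy \<gamma> \<alpha> \<pi> T" and ?\<rho>' = "occupancy \<gamma> \<alpha> \<pi> T'"
  have ne: "space ?\<rho> \<noteq> {}" "space ?\<rho>' \<noteq> {}" by (simp_all add: occ_space)
  note rho = tj_marg[OF occ_sets ne(1) assms(10)]
  note rho' = tj_marg[OF occ_sets ne(2) assms(12)]
  note ae = occ_AE[OF assms(3-11), of \<gamma>]
  note ae' = occ_AE[OF assms(3-9,12,13), of \<gamma>]
  note SA = SA_pred[OF assms(3,4)]
  have L0: "0 \<le> L\<^sub>r" using assms(14) by (rule lipschitz_on_nonneg)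
  have b: "\<bar>integral\<^sup>L ?\<rho> r - integral\<^sup>L ?\<rho>' r\<bar> \<le> L\<^sub>r * (\<epsilon> + d)" if d: "0 < d" for d
  proof -
    have "wasserstein1 (transition_joint ?\<rho> T) (transition_joint ?\<rho>' T') < ennreal (\<epsilon> + d)"
      using assms(17,18) d by (simp add: ennreal_lessI)
    then obtain C where C: "C \<in> couplings (transition_joint ?\<rho> T) (transition_joint ?\<rho>' T')"
      and W: "(\<integral>\<^sup>+ z. ennreal (dist (fst z) (snd z)) \<partial>C) < ennreal (\<epsilon> + d)"
      unfolding wasserstein1_def by (auto simp: INF_less_iff)
    show ?thesis
      by (rule coupling_bound[OF rho rho' C assms(15,16) occ_sets occ_sets ae ae' SA assms(14)])
         (use W d assms(17) in auto)
  qed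
  have diff: "\<bar>integral\<^sup>L ?\<rho> r - integral\<^sup>L ?\<rho>' r\<bar> \<le> \<epsilon> * L\<^sub>r"
  proof (rule field_le_epsilon)
    fix e :: real assume e: "0 < e"
    define d where "d = e / (L\<^sub>r + 1)"
    have d0: "0 < d" using e L0 by (simp add: d_def)
    have "L\<^sub>r * d \<le> e"
    proof -
      have "L\<^sub>r * d = e * (L\<^sub>r / (L\<^sub>r + 1))" by (simp add: d_def)
      also have "\<dots> \<le> e * 1" using e L0 by (intro mult_left_mono) auto
      finally show ?thesis by simp
    qed
    then show "\<bar>integral\<^sup>L ?\<rho> r - integral\<^sup>L ?\<rho>' r\<bar> \<le> \<epsilon> * L\<^sub>r + e"
      using b[OF d0] by (simp add: algebra_simps)
  qed
  have g: "0 < 1 - \<gamma>" using assms(2) by simp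
  have "\<bar>cumulative_reward \<gamma> \<alpha> \<pi> T r - cumulative_reward \<gamma> \<alpha> \<pi> T' r\<bar>
      = \<bar>integral\<^sup>L ?\<rho> r - integral\<^sup>L ?\<rho>' r\<bar> / (1 - \<gamma>)"
    unfolding cumulative_reward_def using g by (simp add: diff_divide_distrib[symmetric])
  also have "\<dots> \<le> \<epsilon> * L\<^sub>r / (1 - \<gamma>)" using diff g by (intro divide_right_mono) auto
  finally show ?thesis .
qed

end
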